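(* Let $0<\beta\leq\frac12$. Then for all $u\in H^1(\mathbb{R}_+)$ \[ \int_0^\infty|u|^2(1+t)^{2\beta-1}dt\leq 2^{-2\beta}(1-2\beta)^{2\beta-1}\beta^{-1}\left(\int_0^\infty|u'|^2dt\right)^{\frac{1-2\beta}2}\left(\int_0^\infty|u|^2dt\right)^{\frac{1+2\beta}2}, \] using the convention $0^0=1$. *)

theory Defs
  imports "HOL-Analysis.Analysis"
begin

text \<open>Real power with the convention 0^0 = 1 (Isabelle's powr has 0 powr 0 = 0).\<close>
definition pow0 :: "real \<Rightarrow> real \<Rightarrow> real" where
  "pow0 x a = (if x = 0 \<and> a = 0 then 1 else x powr a)"

text \<open>u belongs to H^1(R_+) with (weak) derivative u': u and u' are square integrable
  on [0,\<infinity>) and u is (a representative that is) the primitive of u', i.e.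
  u t = u 0 + \<integral>_0^t u' for all t \<ge> 0.\<close>
definition H1_halfline :: "(real \<Rightarrow> complex) \<Rightarrow> (real \<Rightarrow> complex) \<Rightarrow> bool" where
  "H1_halfline u u' \<longleftrightarrow>
     u \<in> borel_measurable lborel \<and> u' \<in> borel_measurable lborel \<and>
     set_integrable lborel {0..} (\<lambda>t. (cmod (u t))^2) \<and>
     set_integrable lborel {0..} (\<lambda>t. (cmod (u' t))^2) \<and>
     (\<forall>t\<ge>0. set_integrable lborel {0..t} u' \<and>
              u t = u 0 + set_lebesgue_integral lborel {0..t} u')"

end

theory Submission
  imports Defs
begin


lemma fub:
  fixes g :: "real \<Rightarrow> real"
  assumes gi: "integrable lborel g"
  shows "(\<integral>x. g x * (\<integral>y. g y * indicator {..x} y \<partial>lborel) \<partial>lborel) = (\<integral>x. g x \<partial>lborel)^2 / 2"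
proof -
  have gm[measurable]: "g \<in> borel_measurable lborel" using gi by (rule borel_measurable_integrable)
  have m1[measurable]: "(\<lambda>(x,y). g x * g y * indicator {..x} y) \<in> borel_measurable (lborel \<Otimes>\<^sub>M lborel)"
  proof -
    have "(\<lambda>(x::real,y::real). g x * g y * indicator {..x} y) = (\<lambda>(x,y). g x * g y * (if y \<le> x then 1 else 0))"
      by (auto simp: fun_eq_iff indicator_def)
    moreover have "(\<lambda>(x::real,y::real). g x * g y * (if y \<le> x then 1 else 0)) \<in> borel_measurable (lborel \<Otimes>\<^sub>M lborel)"
      by measurable
    ultimately show ?thesis by simp
  qed
  have m2[measurable]: "(\<lambda>(x,y). g x * g y * indicator {..<y} x) \<in> borel_measurable (lborel \<Otimes>\<^sub>M lborel)"
  proof -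
    have "(\<lambda>(x::real,y::real). g x * g y * indicator {..<y} x) = (\<lambda>(x,y). g x * g y * (if x < y then 1 else 0))"
      by (auto simp: fun_eq_iff indicator_def)
    moreover have "(\<lambda>(x::real,y::real). g x * g y * (if x < y then 1 else 0)) \<in> borel_measurable (lborel \<Otimes>\<^sub>M lborel)"
      by measurable
    ultimately show ?thesis by simp
  qed
  have i1: "integrable lborel (\<lambda>x. \<integral>y. norm (g x * g y) \<partial>lborel)"
  proof -
    have "(\<lambda>x. \<integral>y. norm (g x * g y) \<partial>lborel) = (\<lambda>x. \<bar>g x\<bar> * (\<integral>y. \<bar>g y\<bar> \<partial>lborel))"
      by (simp add: abs_mult)
    moreover have "integrable lborel (\<lambda>x. \<bar>g x\<bar> * (\<integral>y. \<bar>g y\<bar> \<partial>lborel))"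
      using gi by (intro integrable_mult_left integrable_abs)
    ultimately show ?thesis by simp
  qed
  have int0: "integrable (lborel \<Otimes>\<^sub>M lborel) (\<lambda>(x,y). g x * g y)"
    by (rule lborel_pair.Fubini_integrable) (use i1 gi in auto)
  have int1: "integrable (lborel \<Otimes>\<^sub>M lborel) (\<lambda>(x,y). g x * g y * indicator {..x} y)"
    by (rule Bochner_Integration.integrable_bound[OF int0]) (auto simp: indicator_def abs_mult)
  have int2: "integrable (lborel \<Otimes>\<^sub>M lborel) (\<lambda>(x,y). g x * g y * indicator {..<y} x)"
    by (rule Bochner_Integration.integrable_bound[OF int0]) (auto simp: indicator_def abs_mult)
  note F1 = lborel_pair.integrable_fst[of "\<lambda>x y. g x * g y * indicator {..x} y", OF int1]
  note F2 = lborel_pair.Fubini_integral[of "\<lambda>x y. g x * g y * indicator {..<y} x", OF int2]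
  note F2i = lborel_pair.integrable_fst[of "\<lambda>x y. g x * g y * indicator {..<y} x", OF int2]
  have e1: "\<And>x. (\<integral>y. g x * g y * indicator {..x} y \<partial>lborel) = g x * (\<integral>y. g y * indicator {..x} y \<partial>lborel)"
    by (simp add: mult.assoc)
  have e2: "\<And>y. (\<integral>x. g x * g y * indicator {..<y} x \<partial>lborel) = g y * (\<integral>x. g x * indicator {..<y} x \<partial>lborel)"
    by (simp add: ac_simps)
  have e3: "\<And>y. (\<integral>x. g x * indicator {..<y} x \<partial>lborel) = (\<integral>x. g x * indicator {..y} x \<partial>lborel)"
  proof -
    fix y :: real
    have "AE x in lborel. x \<noteq> y" by (rule AE_lborel_singleton)
    then show "(\<integral>x. g x * indicator {..<y} x \<partial>lborel) = (\<integral>x. g x * indicator {..y} x \<partial>lborel)"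
      by (intro integral_cong_AE) (auto simp: indicator_def)
  qed
  define A where "A = (\<integral>x. g x * (\<integral>y. g y * indicator {..x} y \<partial>lborel) \<partial>lborel)"
  have intA: "integrable lborel (\<lambda>x. g x * (\<integral>y. g y * indicator {..x} y \<partial>lborel))"
    using F1 by (simp only: e1)
  have B: "(\<integral>x. (\<integral>y. g x * g y * indicator {..<y} x \<partial>lborel) \<partial>lborel) = A"
    using F2 unfolding A_def by (simp only: e2 e3)
  have intB: "integrable lborel (\<lambda>x. (\<integral>y. g x * g y * indicator {..<y} x \<partial>lborel))" by (rule F2i)
  have sum: "\<And>x. (\<integral>y. g x * g y * indicator {..x} y \<partial>lborel) + (\<integral>y. g x * g y * indicator {..<y} x \<partial>lborel)
     = g x * (\<integral>y. g y \<partial>lborel)"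
  proof -
    fix x :: real
    have "(\<integral>y. g x * g y * indicator {..x} y \<partial>lborel) + (\<integral>y. g x * g y * indicator {..<y} x \<partial>lborel)
       = (\<integral>y. g x * g y * indicator {..x} y + g x * g y * indicator {..<y} x \<partial>lborel)"
    proof (rule Bochner_Integration.integral_add[symmetric])
      have ia: "integrable lborel (\<lambda>y. g y * indicator {..x} y)"
        by (rule integrable_real_mult_indicator) (auto intro: gi)
      have ib: "integrable lborel (\<lambda>y. g y * indicator {x<..} y)"
        by (rule integrable_real_mult_indicator) (auto intro: gi)
      show "integrable lborel (\<lambda>y. g x * g y * indicator {..x} y)"
        using integrable_mult_right[OF ia, of "g x"] by (simp add: mult.assoc)
      have "(\<lambda>y. g x * (g y * indicator {x<..} y)) = (\<lambda>y. g x * g y * indicator {..<y} x)"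
        by (auto simp: fun_eq_iff indicator_def)
      then show "integrable lborel (\<lambda>y. g x * g y * indicator {..<y} x)"
        using integrable_mult_right[OF ib, of "g x"] by simp
    qed
    also have "\<dots> = (\<integral>y. g x * g y \<partial>lborel)"
      by (intro Bochner_Integration.integral_cong) (auto simp: indicator_def)
    finally show "?thesis x" by simp
  qed
  have "A + A = (\<integral>x. g x * (\<integral>y. g y \<partial>lborel) \<partial>lborel)"
  proof -
    have "A + A = (\<integral>x. (\<integral>y. g x * g y * indicator {..x} y \<partial>lborel) \<partial>lborel) + (\<integral>x. (\<integral>y. g x * g y * indicator {..<y} x \<partial>lborel) \<partial>lborel)"
      unfolding B by (simp add: A_def e1)
    also have "\<dots> = (\<integral>x. (\<integral>y. g x * g y * indicator {..x} y \<partial>lborel) + (\<integral>y. g x * g y * indicator {..<y} x \<partial>lborel) \<partial>lborel)"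
      by (rule Bochner_Integration.integral_add[symmetric]) (use F1 intB in auto)
    also have "\<dots> = (\<integral>x. g x * (\<integral>y. g y \<partial>lborel) \<partial>lborel)" by (simp only: sum)
    finally show ?thesis .
  qed
  then have "A + A = (\<integral>x. g x \<partial>lborel)^2" by (simp add: power2_eq_square)
  then show ?thesis unfolding A_def by simp
qed
lemma sq_identity:
  fixes g v :: "real \<Rightarrow> real" and b :: real
  assumes b: "0 \<le> b" and gi: "integrable lborel (\<lambda>x. g x * indicator {0..b} x)"
    and prim: "\<And>x. 0 \<le> x \<Longrightarrow> x \<le> b \<Longrightarrow> v x = v 0 + (\<integral>y. g y * indicator {0..x} y \<partial>lborel)"
  shows "(\<integral>x. g x * v x * indicator {0..b} x \<partial>lborel) = ((v b)^2 - (v 0)^2) / 2"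
proof -
  define h where "h x = g x * indicator {0..b} x" for x
  have hi: "integrable lborel h" using gi by (simp add: h_def[abs_def])
  have hx: "(\<integral>y. h y * indicator {..x} y \<partial>lborel) = (\<integral>y. g y * indicator {0..x} y \<partial>lborel)"
    if "x \<le> b" for x
    using that by (intro Bochner_Integration.integral_cong) (auto simp: h_def indicator_def)
  have G: "(\<integral>y. h y \<partial>lborel) = v b - v 0"
    using prim[of b] b by (simp add: h_def)
  have "(\<integral>x. g x * v x * indicator {0..b} x \<partial>lborel)
      = (\<integral>x. v 0 * h x + h x * (\<integral>y. h y * indicator {..x} y \<partial>lborel) \<partial>lborel)"
  proof (intro Bochner_Integration.integral_cong refl)
    fix x :: real
    show "g x * v x * indicator {0..b} x = v 0 * h x + h x * (\<integral>y. h y * indicator {..x} y \<partial>lborel)"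
    proof (cases "0 \<le> x \<and> x \<le> b")
      case True
      then show ?thesis using prim[of x] hx[of x] by (simp add: h_def algebra_simps)
    next
      case False
      then show ?thesis by (auto simp: h_def indicator_def)
    qed
  qed
  also have "\<dots> = v 0 * (\<integral>x. h x \<partial>lborel) + (\<integral>x. h x * (\<integral>y. h y * indicator {..x} y \<partial>lborel) \<partial>lborel)"
  proof -
    have i2: "integrable lborel (\<lambda>x. h x * (\<integral>y. h y * indicator {..x} y \<partial>lborel))"
    proof (rule Bochner_Integration.integrable_bound[of _ "\<lambda>x. \<bar>h x\<bar> * (\<integral>y. \<bar>h y\<bar> \<partial>lborel)"])
      show "integrable lborel (\<lambda>x. \<bar>h x\<bar> * (\<integral>y. \<bar>h y\<bar> \<partial>lborel))"
        using hi by (intro integrable_mult_left integrable_abs)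
      have hm[measurable]: "h \<in> borel_measurable lborel" using hi by (rule borel_measurable_integrable)
      have "(\<lambda>(x,y). h y * indicator {..x} y) \<in> borel_measurable (lborel \<Otimes>\<^sub>M lborel)"
      proof -
        have "(\<lambda>(x::real,y::real). h y * indicator {..x} y) = (\<lambda>(x,y). h y * (if y \<le> x then 1 else 0))"
          by (auto simp: fun_eq_iff indicator_def)
        moreover have "(\<lambda>(x::real,y::real). h y * (if y \<le> x then 1 else 0)) \<in> borel_measurable (lborel \<Otimes>\<^sub>M lborel)"
          by measurable
        ultimately show ?thesis by simp
      qed
      then have "(\<lambda>x. \<integral>y. h y * indicator {..x} y \<partial>lborel) \<in> borel_measurable lborel"
        by (rule lborel.borel_measurable_lebesgue_integral)
      then show "(\<lambda>x. h x * (\<integral>y. h y * indicator {..x} y \<partial>lborel)) \<in> borel_measurable lborel"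
        by measurable
      show "AE x in lborel. norm (h x * (\<integral>y. h y * indicator {..x} y \<partial>lborel)) \<le> norm (\<bar>h x\<bar> * (\<integral>y. \<bar>h y\<bar> \<partial>lborel))"
      proof (intro AE_I2)
        fix x
        have "\<bar>\<integral>y. h y * indicator {..x} y \<partial>lborel\<bar> \<le> (\<integral>y. \<bar>h y * indicator {..x} y\<bar> \<partial>lborel)"
          by (rule integral_abs_bound)
        also have "\<dots> \<le> (\<integral>y. \<bar>h y\<bar> \<partial>lborel)"
          by (intro integral_mono integrable_abs hi integrable_real_mult_indicator)
             (auto simp: indicator_def abs_mult)
        finally show "norm (h x * (\<integral>y. h y * indicator {..x} y \<partial>lborel)) \<le> norm (\<bar>h x\<bar> * (\<integral>y. \<bar>h y\<bar> \<partial>lborel))"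
          by (simp add: abs_mult mult_left_mono)
      qed
    qed
    show ?thesis
      by (subst Bochner_Integration.integral_add) (use hi i2 in auto)
  qed
  also have "\<dots> = v 0 * (v b - v 0) + (v b - v 0)^2 / 2"
    using fub[OF hi] G by simp
  also have "\<dots> = ((v b)^2 - (v 0)^2) / 2" by (simp add: power2_eq_square field_simps)
  finally show ?thesis .
qed
lemma lam_bound:
  fixes x N D :: real
  assumes "N \<ge> 0" "D \<ge> 0" and h: "\<And>l. l > 0 \<Longrightarrow> x \<le> l * N + D / l"
  shows "x \<le> 2 * sqrt N * sqrt D"
proof (cases "N > 0 \<and> D > 0")
  case True
  have "x \<le> (sqrt D / sqrt N) * N + D / (sqrt D / sqrt N)" using True by (intro h) auto
  also have "\<dots> = 2 * sqrt N * sqrt D"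
    using True by (simp add: field_simps)
  finally show ?thesis .
next
  case False
  show ?thesis
  proof (rule ccontr)
    assume "\<not> ?thesis"
    with False assms(1,2) have x: "x > 0" by auto
    show False
    proof (cases "N = 0")
      case True
      have "x \<le> (2*D/x+1) * N + D / (2*D/x+1)" using x assms by (intro h) (auto intro: add_nonneg_pos)
      also have "\<dots> = D * x / (2*D + x)" using True x assms by (simp add: field_simps)
      also have "\<dots> < x" using x assms by (simp add: field_simps add_nonneg_pos)
      finally show False by simp
    next
      case N: False
      with False assms have D: "D = 0" by auto
      have "x \<le> (x/(2*N+1)) * N + D / (x/(2*N+1))" using x assms by (intro h) auto
      also have "\<dots> = x * N / (2*N + 1)" using D by simp
      also have "\<dots> < x" using x assms by (simp add: field_simps add_pos_nonneg)
      finally show False by simp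
    qed
  qed
qed


lemma ab_le: "(a::real) * b \<le> a^2 + b^2"
proof -
  have "0 \<le> (a - b)^2" by simp
  moreover have "0 \<le> a^2" "0 \<le> b^2" by simp_all
  ultimately show ?thesis unfolding power2_diff by linarith
qed

lemma sup_bound:
  fixes u u' :: "real \<Rightarrow> complex" and t :: real
  assumes H: "H1_halfline u u'" and t: "0 \<le> t"
  shows "(cmod (u t))^2 \<le> 2 * sqrt (\<integral>x. (cmod (u x))^2 * indicator {0..} x \<partial>lborel)
                              * sqrt (\<integral>x. (cmod (u' x))^2 * indicator {0..} x \<partial>lborel)"
proof -
  have H': "u \<in> borel_measurable lborel" "u' \<in> borel_measurable lborel"
    "set_integrable lborel {0..} (\<lambda>t. (cmod (u t))^2)" "set_integrable lborel {0..} (\<lambda>t. (cmod (u' t))^2)"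
    "\<forall>t\<ge>0. set_integrable lborel {0..t} u' \<and> u t = u 0 + set_lebesgue_integral lborel {0..t} u'"
    using H unfolding H1_halfline_def by blast+
  have um[measurable]: "u \<in> borel_measurable lborel" and u'm[measurable]: "u' \<in> borel_measurable lborel"
    using H' by blast+
  have sw: "\<And>f A. (\<lambda>x. indicator A x *\<^sub>R (f x::real)) = (\<lambda>x. f x * indicator A x)"
    by (simp add: fun_eq_iff)
  have Ni: "integrable lborel (\<lambda>x. (cmod (u x))^2 * indicator {0..} x)"
    using H'(3) unfolding set_integrable_def sw .
  have Di: "integrable lborel (\<lambda>x. (cmod (u' x))^2 * indicator {0..} x)"
    using H'(4) unfolding set_integrable_def sw .
  have pint: "\<And>x. 0 \<le> x \<Longrightarrow> integrable lborel (\<lambda>y. indicator {0..x} y *\<^sub>R u' y)"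
    using H'(5) unfolding set_integrable_def by blast
  have prim: "\<And>x. 0 \<le> x \<Longrightarrow> u x = u 0 + (\<integral>y. indicator {0..x} y *\<^sub>R u' y \<partial>lborel)"
    using H'(5) unfolding set_lebesgue_integral_def by blast
  define N where "N = (\<integral>x. (cmod (u x))^2 * indicator {0..} x \<partial>lborel)"
  define D where "D = (\<integral>x. (cmod (u' x))^2 * indicator {0..} x \<partial>lborel)"
  have N0: "N \<ge> 0" unfolding N_def by (intro integral_nonneg_AE) auto
  have D0: "D \<ge> 0" unfolding D_def by (intro integral_nonneg_AE) auto
  define S where "S x = (cmod (u x))^2 * indicator {0..} x + (cmod (u' x))^2 * indicator {0..} x" for x
  have Si: "integrable lborel S" unfolding S_def[abs_def] using Ni Di by simp
  have prodi: "integrable lborel (\<lambda>x. f x * g x * indicator A x)"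
    if [measurable]: "f \<in> borel_measurable lborel" "g \<in> borel_measurable lborel" "A \<in> sets lborel"
      and A: "A \<subseteq> {0..}" and f: "\<And>x. \<bar>f x\<bar> \<le> cmod (u x)" and g: "\<And>x. \<bar>g x\<bar> \<le> cmod (u' x)"
    for f g :: "real \<Rightarrow> real" and A
  proof (rule Bochner_Integration.integrable_bound[OF Si])
    show "(\<lambda>x. f x * g x * indicator A x) \<in> borel_measurable lborel" by measurable
    show "AE x in lborel. norm (f x * g x * indicator A x) \<le> norm (S x)"
    proof (intro AE_I2)
      fix x
      have "\<bar>f x\<bar> * \<bar>g x\<bar> \<le> cmod (u x) * cmod (u' x)"
        using f g by (intro mult_mono) auto
      also have "\<dots> \<le> (cmod (u x))^2 + (cmod (u' x))^2"
        by (rule ab_le)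
      finally show "norm (f x * g x * indicator A x) \<le> norm (S x)"
        using A by (auto simp: S_def indicator_def abs_mult)
    qed
  qed
  define q where "q x = Re (u x) * Re (u' x) + Im (u x) * Im (u' x)" for x
  have qb: "\<bar>q x\<bar> \<le> cmod (u x) * cmod (u' x)" for x
  proof -
    have "q x = Re (cnj (u x) * u' x)" by (simp add: q_def)
    also have "\<bar>\<dots>\<bar> \<le> cmod (cnj (u x) * u' x)" by (rule abs_Re_le_cmod)
    finally show ?thesis by (simp add: norm_mult)
  qed
  have qm[measurable]: "q \<in> borel_measurable lborel" unfolding q_def[abs_def] by measurable
  have absRe: "\<bar>Re z\<bar> \<le> cmod z" "\<bar>Im z\<bar> \<le> cmod z" for z by (rule abs_Re_le_cmod, rule abs_Im_le_cmod)
  have Phi: "(cmod (u b))^2 = (cmod (u 0))^2 + 2 * (\<integral>x. q x * indicator {0..b} x \<partial>lborel)" if b: "0 \<le> b" for b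
  proof -
    have i1: "integrable lborel (\<lambda>x. Re (u' x) * Re (u x) * indicator {0..b} x)"
      using prodi[of "\<lambda>x. Re (u x)" "\<lambda>x. Re (u' x)" "{0..b}"] absRe
      by (simp add: mult.commute mult.left_commute)
    have i2: "integrable lborel (\<lambda>x. Im (u' x) * Im (u x) * indicator {0..b} x)"
      using prodi[of "\<lambda>x. Im (u x)" "\<lambda>x. Im (u' x)" "{0..b}"] absRe
      by (simp add: mult.commute mult.left_commute)
    have r: "(\<integral>x. Re (u' x) * Re (u x) * indicator {0..b} x \<partial>lborel) = ((Re (u b))^2 - (Re (u 0))^2) / 2"
    proof (rule sq_identity[OF b])
      show "integrable lborel (\<lambda>x. Re (u' x) * indicator {0..b} x)"
        using integrable_Re[OF pint[OF b]] by (simp add: mult.commute)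
      show "Re (u x) = Re (u 0) + (\<integral>y. Re (u' y) * indicator {0..x} y \<partial>lborel)" if "0 \<le> x" "x \<le> b" for x
        using arg_cong[OF prim[OF that(1)], of Re] integral_Re[OF pint[OF that(1)]] by (simp add: mult.commute)
    qed
    have i: "(\<integral>x. Im (u' x) * Im (u x) * indicator {0..b} x \<partial>lborel) = ((Im (u b))^2 - (Im (u 0))^2) / 2"
    proof (rule sq_identity[OF b])
      show "integrable lborel (\<lambda>x. Im (u' x) * indicator {0..b} x)"
        using integrable_Im[OF pint[OF b]] by (simp add: mult.commute)
      show "Im (u x) = Im (u 0) + (\<integral>y. Im (u' y) * indicator {0..x} y \<partial>lborel)" if "0 \<le> x" "x \<le> b" for x
        using arg_cong[OF prim[OF that(1)], of Im] integral_Im[OF pint[OF that(1)]] by (simp add: mult.commute)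
    qed
    have "(\<integral>x. q x * indicator {0..b} x \<partial>lborel) = (\<integral>x. Re (u' x) * Re (u x) * indicator {0..b} x + Im (u' x) * Im (u x) * indicator {0..b} x \<partial>lborel)"
      by (intro Bochner_Integration.integral_cong) (auto simp: q_def algebra_simps)
    also have "\<dots> = ((Re (u b))^2 - (Re (u 0))^2) / 2 + ((Im (u b))^2 - (Im (u 0))^2) / 2"
      by (subst Bochner_Integration.integral_add[OF i1 i2]) (simp only: r i)
    finally show ?thesis by (simp add: cmod_power2 field_simps)
  qed
  define K where "K = 2 * (\<integral>x. \<bar>q x\<bar> * indicator {0..} x \<partial>lborel)"
  have qai: "integrable lborel (\<lambda>x. \<bar>q x\<bar> * indicator {0..} x)"
  proof (rule Bochner_Integration.integrable_bound[OF Si])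
    show "AE x in lborel. norm (\<bar>q x\<bar> * indicator {0..} x) \<le> norm (S x)"
    proof (intro AE_I2)
      fix x
      have "\<bar>q x\<bar> \<le> cmod (u x) * cmod (u' x)" by (rule qb)
      also have "\<dots> \<le> (cmod (u x))^2 + (cmod (u' x))^2"
        by (rule ab_le)
      finally show "norm (\<bar>q x\<bar> * indicator {0..} x) \<le> norm (S x)"
        by (auto simp: S_def indicator_def)
    qed
  qed measurable
  have qi: "integrable lborel (\<lambda>x. q x * indicator {0..b} x)" for b
    by (rule Bochner_Integration.integrable_bound[OF qai]) (auto simp: indicator_def)
  have step: "(cmod (u t))^2 \<le> (cmod (u s))^2 + K" if "t \<le> s" for s
  proof -
    have "(\<integral>x. q x * indicator {0..t} x \<partial>lborel) - (\<integral>x. q x * indicator {0..s} x \<partial>lborel)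
        = (\<integral>x. q x * indicator {0..t} x - q x * indicator {0..s} x \<partial>lborel)"
      using qi by simp
    also have "\<dots> \<le> (\<integral>x. \<bar>q x\<bar> * indicator {0..} x \<partial>lborel)"
      using qi qai that by (intro integral_mono) (auto simp: indicator_def)
    finally show ?thesis using Phi[of t] Phi[of s] t that unfolding K_def by linarith
  qed
  have Kb: "K \<le> l * N + D / l" if l: "l > 0" for l
  proof -
    have "K \<le> 2 * (\<integral>x. ((l * (cmod (u x))^2 + (cmod (u' x))^2 / l) / 2) * indicator {0..} x \<partial>lborel)"
      unfolding K_def
    proof (intro mult_left_mono integral_mono qai)
      show "integrable lborel (\<lambda>x. ((l * (cmod (u x))^2 + (cmod (u' x))^2 / l) / 2) * indicator {0..} x)"
        using Ni Di by (simp add: algebra_simps add_divide_distrib)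
      fix x
      have "\<bar>q x\<bar> \<le> cmod (u x) * cmod (u' x)" by (rule qb)
      also have "\<dots> \<le> (l * (cmod (u x))^2 + (cmod (u' x))^2 / l) / 2"
      proof -
        have "0 \<le> (l * cmod (u x) - cmod (u' x))^2 / l" using l by simp
        then show ?thesis using l by (simp add: field_simps power2_eq_square)
      qed
      finally show "\<bar>q x\<bar> * indicator {0..} x \<le> ((l * (cmod (u x))^2 + (cmod (u' x))^2 / l) / 2) * indicator {0..} x"
        by (auto simp: indicator_def)
    qed simp
    also have "\<dots> = l * N + D / l"
      unfolding N_def D_def using Ni Di
      by (simp add: algebra_simps add_divide_distrib)
    finally show ?thesis .
  qed
  have main: "(cmod (u t))^2 \<le> K"
  proof (rule ccontr)
    assume "\<not> ?thesis"
    define e where "e = (cmod (u t))^2 - K"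
    have e: "e > 0" using \<open>\<not> _\<close> by (simp add: e_def)
    have low: "(cmod (u s))^2 \<ge> e" if "t \<le> s" for s using step[OF that] by (simp add: e_def)
    obtain n :: nat where n: "N / e < n" using reals_Archimedean2 by blast
    have "e * n = (\<integral>x. e * indicator {t..t + n} x \<partial>lborel)"
      by (subst integral_FTC_Icc_real[where F = "\<lambda>x. e * x"]) (auto intro!: derivative_eq_intros simp: algebra_simps)
    also have "\<dots> \<le> N"
      unfolding N_def
    proof (intro integral_mono Ni)
      show "integrable lborel (\<lambda>x. e * indicator {t..t + real n} x)"
        using borel_integrable_atLeastAtMost[of t "t + n" "\<lambda>_. e"] by simp
      fix x show "e * indicator {t..t + real n} x \<le> (cmod (u x))^2 * indicator {0..} x"
        using low[of x] t by (auto simp: indicator_def)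
    qed
    finally have "e * n \<le> N" .
    with n e show False by (simp add: field_simps)
  qed
  have "(cmod (u t))^2 \<le> 2 * sqrt N * sqrt D"
    using main Kb N0 D0 by (intro lam_bound) force+
  then show ?thesis by (simp add: N_def D_def)
qed


lemma subadd_powr:
  fixes T p :: real
  assumes T: "T > 0" and p: "0 < p" "p \<le> 1"
  shows "(1 + T) powr p \<le> 1 + T powr p"
proof -
  have "(1 + T) powr p = (1 + T) powr ((p - 1) + 1)" by simp
  also have "\<dots> = (1 + T) powr (p - 1) * (1 + T) powr 1" by (rule powr_add)
  also have "\<dots> = (1 + T) powr (p - 1) * (1 + T)" using T by simp
  also have "\<dots> = (1 + T) powr (p - 1) + T * (1 + T) powr (p - 1)" by (simp add: algebra_simps)
  also have "\<dots> \<le> 1 + T * T powr (p - 1)"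
  proof (rule add_mono)
    show "(1 + T) powr (p - 1) \<le> 1"
      using powr_mono[of "p - 1" 0 "1 + T"] T p by simp
    show "T * (1 + T) powr (p - 1) \<le> T * T powr (p - 1)"
      using T p by (intro mult_left_mono powr_mono2') auto
  qed
  also have "T * T powr (p - 1) = T powr 1 * T powr (p - 1)" using T by simp
  also have "\<dots> = T powr (1 + (p - 1))" by (rule powr_add[symmetric])
  also have "\<dots> = T powr p" by simp
  finally show ?thesis .
qed

lemma int_w:
  fixes T p :: real
  assumes T: "T \<ge> 0" and p: "0 < p"
  shows "(\<integral>x. (1 + x) powr (p - 1) * indicator {0..T} x \<partial>lborel) = ((1 + T) powr p - 1) / p"
proof -
  have "(\<integral>x. (1 + x) powr (p - 1) * indicator {0..T} x \<partial>lborel) = (1 + T) powr p / p - (1 + 0) powr p / p"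
  proof (rule integral_FTC_Icc_real)
    show "0 \<le> T" by fact
    fix x :: real assume x: "0 \<le> x" "x \<le> T"
    show "((\<lambda>x. (1 + x) powr p / p) has_real_derivative (1 + x) powr (p - 1)) (at x)"
    proof -
      have x1: "1 + x > 0" using x by simp
      have "(1 + x) powr (p - 1) = (1 + x) powr p / (1 + x)" using x1 by (simp add: powr_diff)
      then show ?thesis using x1 p by (auto intro!: derivative_eq_intros simp: divide_simps)
    qed
    show "isCont (\<lambda>x. (1 + x) powr (p - 1)) x"
      using x by (auto intro!: continuous_intros)
  qed
  then show ?thesis by (simp add: diff_divide_distrib)
qed


theorem lemma6p6:
  fixes \<beta> :: real and u u' :: "real \<Rightarrow> complex"
  assumes "0 < \<beta>" and "\<beta> \<le> 1/2" and "H1_halfline u u'"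
  shows "set_lebesgue_integral lborel {0..} (\<lambda>t. (cmod (u t))^2 * (1 + t) powr (2*\<beta> - 1))
    \<le> 2 powr (-2*\<beta>) * pow0 (1 - 2*\<beta>) (2*\<beta> - 1) / \<beta>
       * pow0 (set_lebesgue_integral lborel {0..} (\<lambda>t. (cmod (u' t))^2)) ((1 - 2*\<beta>)/2)
       * pow0 (set_lebesgue_integral lborel {0..} (\<lambda>t. (cmod (u t))^2)) ((1 + 2*\<beta>)/2)"
proof -
  note H = assms(3)
  have H': "u \<in> borel_measurable lborel" "u' \<in> borel_measurable lborel"
    "set_integrable lborel {0..} (\<lambda>t. (cmod (u t))^2)" "set_integrable lborel {0..} (\<lambda>t. (cmod (u' t))^2)"
    using H unfolding H1_halfline_def by blast+
  have um[measurable]: "u \<in> borel_measurable lborel" using H' by blast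
  have sw: "\<And>f A. (\<lambda>x. indicator A x *\<^sub>R (f x::real)) = (\<lambda>x. f x * indicator A x)"
    by (simp add: fun_eq_iff)
  have Ni: "integrable lborel (\<lambda>x. (cmod (u x))^2 * indicator {0..} x)"
    using H'(3) unfolding set_integrable_def sw .
  define N where "N = (\<integral>x. (cmod (u x))^2 * indicator {0..} x \<partial>lborel)"
  define D where "D = (\<integral>x. (cmod (u' x))^2 * indicator {0..} x \<partial>lborel)"
  have N0: "N \<ge> 0" unfolding N_def by (intro integral_nonneg_AE) auto
  have D0: "D \<ge> 0" unfolding D_def by (intro integral_nonneg_AE) auto
  have NE: "set_lebesgue_integral lborel {0..} (\<lambda>t. (cmod (u t))^2) = N"
    unfolding set_lebesgue_integral_def sw N_def ..
  have DE: "set_lebesgue_integral lborel {0..} (\<lambda>t. (cmod (u' t))^2) = D"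
    unfolding set_lebesgue_integral_def sw D_def ..
  define w where "w t = (1 + t) powr (2*\<beta> - 1)" for t :: real
  define L where "L = (\<integral>x. (cmod (u x))^2 * w x * indicator {0..} x \<partial>lborel)"
  have LE: "set_lebesgue_integral lborel {0..} (\<lambda>t. (cmod (u t))^2 * (1 + t) powr (2*\<beta> - 1)) = L"
    unfolding set_lebesgue_integral_def sw L_def w_def ..
  have w0: "w t \<ge> 0" for t unfolding w_def by simp
  have w1: "w t \<le> 1" if "t \<ge> 0" for t
    using powr_mono[of "2*\<beta> - 1" 0 "1 + t"] that assms(2) unfolding w_def by simp
  have wm[measurable]: "w \<in> borel_measurable lborel" unfolding w_def[abs_def] by measurable
  have Li: "integrable lborel (\<lambda>x. (cmod (u x))^2 * w x * indicator {0..} x)"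
  proof (rule Bochner_Integration.integrable_bound[OF Ni])
    show "AE x in lborel. norm ((cmod (u x))^2 * w x * indicator {0..} x) \<le> norm ((cmod (u x))^2 * indicator {0..} x)"
    proof (intro AE_I2)
      fix x :: real
      show "norm ((cmod (u x))^2 * w x * indicator {0..} x) \<le> norm ((cmod (u x))^2 * indicator {0..} x)"
        using w0[of x] w1[of x] by (auto simp: indicator_def abs_mult intro: mult_left_le)
    qed
  qed measurable
  define M where "M = 2 * sqrt N * sqrt D"
  have M0: "M \<ge> 0" unfolding M_def using N0 D0 by simp
  have ub: "(cmod (u t))^2 \<le> M" if "t \<ge> 0" for t
    using sup_bound[OF H that] unfolding M_def N_def D_def .
  have pow0_nn: "pow0 x a \<ge> 0" for x a unfolding pow0_def by simp
  show ?thesis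
    unfolding LE NE DE
  proof (cases "\<beta> = 1/2")
    case True
    have "L = N" unfolding L_def N_def
      by (intro Bochner_Integration.integral_cong) (auto simp: w_def True indicator_def)
    moreover have "pow0 D 0 = 1" unfolding pow0_def by simp
    ultimately show "L \<le> 2 powr (-2*\<beta>) * pow0 (1 - 2*\<beta>) (2*\<beta> - 1) / \<beta> * pow0 D ((1 - 2*\<beta>)/2) * pow0 N ((1 + 2*\<beta>)/2)"
      using N0 by (simp add: True pow0_def powr_minus)
  next
    case False
    then have b: "\<beta> < 1/2" using assms(2) by simp
    show "L \<le> 2 powr (-2*\<beta>) * pow0 (1 - 2*\<beta>) (2*\<beta> - 1) / \<beta> * pow0 D ((1 - 2*\<beta>)/2) * pow0 N ((1 + 2*\<beta>)/2)"
    proof (cases "M = 0")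
      case True
      have "L = 0" unfolding L_def
        using ub True by (intro integral_eq_zero_AE AE_I2) (auto simp: indicator_def)
      show ?thesis unfolding \<open>L = 0\<close>
        by (intro mult_nonneg_nonneg divide_nonneg_pos pow0_nn) (use assms(1) in auto)
    next
      case Mne: False
      then have Mp: "M > 0" using M0 by simp
      have Np: "N > 0" using Mp N0 unfolding M_def by (cases "N = 0") auto
      have Dp: "D > 0" using Mp D0 unfolding M_def by (cases "D = 0") auto
      define p where "p = 2 * \<beta>"
      have p: "0 < p" "p < 1" using assms(1) b by (auto simp: p_def)
      define T where "T = (1 - p) * N / M"
      have Tp: "T > 0" using p Np Mp by (simp add: T_def)
      have "L \<le> (\<integral>x. M * (w x * indicator {0..T} x) + T powr (p - 1) * ((cmod (u x))^2 * indicator {0..} x) \<partial>lborel)"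
        unfolding L_def
      proof (intro integral_mono Li)
        have wi: "integrable lborel (\<lambda>x. w x * indicator {0..T} x)"
          unfolding w_def by (rule borel_integrable_atLeastAtMost) (auto intro!: continuous_intros)
        show "integrable lborel (\<lambda>x. M * (w x * indicator {0..T} x) + T powr (p - 1) * ((cmod (u x))^2 * indicator {0..} x))"
          using wi Ni by auto
        fix x :: real
        show "(cmod (u x))^2 * w x * indicator {0..} x \<le> M * (w x * indicator {0..T} x) + T powr (p - 1) * ((cmod (u x))^2 * indicator {0..} x)"
        proof (cases "x < 0")
          case True then show ?thesis by (simp add: indicator_def)
        next
          case x0: False
          show ?thesis
          proof (cases "x \<le> T")
            case True
            have "(cmod (u x))^2 * w x \<le> M * w x" using ub[of x] x0 w0[of x] by (intro mult_right_mono) auto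
            moreover have "0 \<le> T powr (p - 1) * (cmod (u x))^2" by simp
            ultimately show ?thesis using True x0 by (simp add: indicator_def add_increasing2)
          next
            case False
            have wT: "w x \<le> T powr (p - 1)" unfolding w_def p_def
              using False Tp p by (intro powr_mono2') (auto simp: p_def)
            have "(cmod (u x))^2 * w x \<le> T powr (p - 1) * (cmod (u x))^2"
              using mult_left_mono[OF wT, of "(cmod (u x))^2"] by (simp add: mult.commute)
            moreover have "0 \<le> M * w x" using M0 w0[of x] by simp
            ultimately show ?thesis using False x0 by (simp add: indicator_def add_increasing)
          qed
        qed
      qed
      also have "\<dots> = M * (\<integral>x. w x * indicator {0..T} x \<partial>lborel) + T powr (p - 1) * N"
      proof -
        have wi: "integrable lborel (\<lambda>x. w x * indicator {0..T} x)"
          unfolding w_def by (rule borel_integrable_atLeastAtMost) (auto intro!: continuous_intros)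
        show ?thesis using wi Ni unfolding N_def by simp
      qed
      also have "(\<integral>x. w x * indicator {0..T} x \<partial>lborel) = ((1 + T) powr p - 1) / p"
        unfolding w_def p_def using int_w[of T "2*\<beta>"] Tp assms(1) by simp
      also have "M * (((1 + T) powr p - 1) / p) + T powr (p - 1) * N \<le> M * (T powr p / p) + T powr (p - 1) * N"
        using subadd_powr[OF Tp p(1)] p Mp by (intro add_right_mono mult_left_mono divide_right_mono) auto
      also have "M * (T powr p / p) + T powr (p - 1) * N = T powr (p - 1) * N / p"
      proof -
        have "T powr p = T * T powr (p - 1)"
          using Tp by (simp add: powr_add[symmetric] powr_diff)
        then show ?thesis using p Mp unfolding T_def by (simp add: field_simps)
      qed
      also have "T powr (p - 1) * N / p = 2 powr (-2*\<beta>) * pow0 (1 - 2*\<beta>) (2*\<beta> - 1) / \<beta> * pow0 D ((1 - 2*\<beta>)/2) * pow0 N ((1 + 2*\<beta>)/2)"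
      proof -
        have e1: "pow0 (1 - 2*\<beta>) (2*\<beta> - 1) = (1 - p) powr (p - 1)"
          using p unfolding pow0_def p_def by auto
        have e2: "pow0 D ((1 - 2*\<beta>)/2) = D powr ((1 - p)/2)"
          using Dp unfolding pow0_def p_def by auto
        have e3: "pow0 N ((1 + 2*\<beta>)/2) = N powr ((1 + p)/2)"
          using Np unfolding pow0_def p_def by auto
        have e4: "2 powr (-2*\<beta>) * X / \<beta> = 2 powr (-p) * X * 2 / p" for X
          using p unfolding p_def by simp
        have hh: "ln (N - N * p) = ln N + ln (1 - p)"
        proof -
          have "N - N * p = N * (1 - p)" by (simp add: algebra_simps)
          then show ?thesis using p Np by (simp add: ln_mult)
        qed
        have "ln (T powr (p - 1) * N / p) = ln (2 powr (-p) * (1 - p) powr (p - 1) * 2 / p * D powr ((1 - p)/2) * N powr ((1 + p)/2))"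
          using p Np Dp Tp unfolding T_def M_def
          by (simp add: ln_mult ln_div ln_powr ln_sqrt field_simps hh)
        then have "T powr (p - 1) * N / p = 2 powr (-p) * (1 - p) powr (p - 1) * 2 / p * D powr ((1 - p)/2) * N powr ((1 + p)/2)"
          using p Np Dp Tp by (subst (asm) ln_inj_iff) auto
        then show ?thesis unfolding e1 e2 e3 e4 by simp
      qed
      finally show ?thesis .
    qed
  qed
qed

end
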